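(* Let $\xi$ be a complex random variable with $\mathbb{E}\xi=0$, $\mathbb{E}|\xi|^2=1$ and $\mathbb{E}|\xi|^{4+\epsilon}<\infty$ for some $\epsilon>0$; let $b_n$ divide $n$, let $\tilde X$ be the $n\times n$ periodic block band matrix with atom variable $\xi$ and bandwidth $b_n$, and $X=\tilde X/\sqrt{3b_n}$. For fixed $z\in\mathbb{C}$ and $\zeta$ with $\Im\zeta>0$, let $P_{z,\zeta}:=(X-zI)(X-zI)^*-\zeta I$. Then for all $1\le i\le n$, $$\mathbb{E}\big[(P_{z,\zeta})^{-1}_{ii}\big]=\mathbb{E}\big[(P_{z,\zeta})^{-1}_{11}\big].$$
   Context: Periodic block band matrix: $m:=n/b_n$; $\tilde D_i,\tilde U_i,\tilde T_i$ ($i\in[m]$) are $3m$ independent $b_n\times b_n$ random matrices with iid entries distributed as $\xi$; $\tilde X$ is the $m\times m$ block matrix (blocks $b_n\times b_n$, block indices modulo $m$) with $(i,i)$ block $\tilde D_i$, $(i,i-1)$ block $\tilde T_{i-1}$, $(i,i+1)$ block $\tilde U_{i+1}$, other blocks zero. *)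

theory Defs
  imports "HOL-Probability.Probability" "Jordan_Normal_Form.Schur_Decomposition"
          "Jordan_Normal_Form.Gauss_Jordan_Elimination"
begin

text \<open>Entries of the building blocks: E (k, i, a, c) is the (a,c) entry of the
  i-th block of kind k, where kind 0 = D, kind 1 = U, kind 2 = T.
  Indices are 0-based: blocks i < m, entries a, c < b.\<close>

definition block_index_set :: "nat \<Rightarrow> nat \<Rightarrow> (nat \<times> nat \<times> nat \<times> nat) set" where
  "block_index_set m b = {0..<3} \<times> {0..<m} \<times> {0..<b} \<times> {0..<b}"

text \<open>The (i,i) block is D_i,
  the (i,i-1) block is T_{i-1}, the (i,i+1) block is U_{i+1} (indices mod m);
  contributions are added if these positions coincide (m \<le> 2).\<close>

definition periodic_band :: "nat \<Rightarrow> nat \<Rightarrow> (nat \<times> nat \<times> nat \<times> nat \<Rightarrow> complex) \<Rightarrow> complex mat" where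
  "periodic_band n b e = (let m = n div b in
     mat n n (\<lambda>(r, s).
       let i = r div b; j = s div b; a = r mod b; c = s mod b;
           im = (i + m - 1) mod m; ip = (i + 1) mod m in
       (if j = i then e (0, i, a, c) else 0)
     + (if j = im then e (2, im, a, c) else 0)
     + (if j = ip then e (1, ip, a, c) else 0)))"

definition resolvent_P :: "complex mat \<Rightarrow> complex \<Rightarrow> complex \<Rightarrow> complex mat" where
  "resolvent_P X z \<zeta> = (let n = dim_row X; Y = X - z \<cdot>\<^sub>m 1\<^sub>m n in
      the (mat_inverse (Y * mat_adjoint Y - \<zeta> \<cdot>\<^sub>m 1\<^sub>m n)))"

end

theory Submission
  imports Defs "HOL-Number_Theory.Cong"
begin



lemma key_psd:
  fixes y :: "nat \<Rightarrow> nat \<Rightarrow> complex" and x :: "nat \<Rightarrow> complex"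
  assumes h: "\<And>r. r < n \<Longrightarrow> (\<Sum>t=0..<n. ((\<Sum>u=0..<n. y r u * cnj (y t u)) - (if r = t then \<zeta> else 0)) * x t) = 0"
    and z: "Im \<zeta> \<noteq> 0"
  shows "\<forall>t<n. x t = 0"
proof -
  define w where "w u = (\<Sum>t=0..<n. cnj (y t u) * x t)" for u
  define S where "S r t = (\<Sum>u=0..<n. y r u * cnj (y t u))" for r t
  have "0 = (\<Sum>r=0..<n. cnj (x r) * (\<Sum>t=0..<n. (S r t - (if r = t then \<zeta> else 0)) * x t))"
    using h by (simp add: S_def)
  also have "\<dots> = (\<Sum>r=0..<n. (\<Sum>t=0..<n. cnj (x r) * S r t * x t) - \<zeta> * (cnj (x r) * x r))"
  proof (rule sum.cong[OF refl])
    fix r assume r: "r \<in> {0..<n}"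
    have "(\<Sum>t=0..<n. (S r t - (if r = t then \<zeta> else 0)) * x t)
       = (\<Sum>t=0..<n. S r t * x t) - (\<Sum>t=0..<n. (if r = t then \<zeta> * x t else 0))"
      unfolding sum_subtractf[symmetric] by (intro sum.cong) (auto simp: algebra_simps)
    also have "(\<Sum>t=0..<n. (if r = t then \<zeta> * x t else 0)) = \<zeta> * x r"
      using r by (simp add: sum.delta)
    finally show "cnj (x r) * (\<Sum>t=0..<n. (S r t - (if r = t then \<zeta> else 0)) * x t)
       = (\<Sum>t=0..<n. cnj (x r) * S r t * x t) - \<zeta> * (cnj (x r) * x r)"
      by (simp add: right_diff_distrib sum_distrib_left mult_ac)
  qed
  also have "\<dots> = (\<Sum>r=0..<n. \<Sum>t=0..<n. cnj (x r) * S r t * x t) - (\<Sum>r=0..<n. \<zeta> * (cnj (x r) * x r))"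
    by (simp add: sum_subtractf)
  also have "(\<Sum>r=0..<n. \<Sum>t=0..<n. cnj (x r) * S r t * x t) = (\<Sum>u=0..<n. cnj (w u) * w u)"
  proof -
    have "(\<Sum>r=0..<n. \<Sum>t=0..<n. cnj (x r) * S r t * x t)
        = (\<Sum>r=0..<n. \<Sum>t=0..<n. \<Sum>u=0..<n. (y r u * cnj (x r)) * (cnj (y t u) * x t))"
      by (simp add: S_def sum_distrib_left sum_distrib_right mult_ac)
    also have "\<dots> = (\<Sum>r=0..<n. \<Sum>u=0..<n. \<Sum>t=0..<n. (y r u * cnj (x r)) * (cnj (y t u) * x t))"
      by (rule sum.cong[OF refl], rule sum.swap)
    also have "\<dots> = (\<Sum>u=0..<n. \<Sum>r=0..<n. \<Sum>t=0..<n. (y r u * cnj (x r)) * (cnj (y t u) * x t))"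
      by (rule sum.swap)
    also have "\<dots> = (\<Sum>u=0..<n. cnj (w u) * w u)"
      by (simp add: w_def sum_product)
    finally show ?thesis .
  qed
  finally have eq: "(\<Sum>u=0..<n. cnj (w u) * w u) = \<zeta> * (\<Sum>r=0..<n. cnj (x r) * x r)"
    by (simp add: sum_distrib_left)
  have r1: "cnj (w u) * w u = complex_of_real ((cmod (w u))\<^sup>2)" for u
    using complex_norm_square[of "w u"] by (simp add: mult.commute)
  have r2: "cnj (x u) * x u = complex_of_real ((cmod (x u))\<^sup>2)" for u
    using complex_norm_square[of "x u"] by (simp add: mult.commute)
  have "Im (\<zeta> * (\<Sum>r=0..<n. cnj (x r) * x r)) = 0"
    using eq[symmetric] by (simp add: r1 flip: of_real_sum)
  hence "Im \<zeta> * (\<Sum>r=0..<n. (cmod (x r))\<^sup>2) = 0"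
    by (simp add: r2 flip: of_real_sum)
  hence "(\<Sum>r=0..<n. (cmod (x r))\<^sup>2) = 0" using z by simp
  hence "\<forall>r\<in>{0..<n}. (cmod (x r))\<^sup>2 = 0"
    by (subst (asm) sum_nonneg_eq_0_iff) auto
  thus ?thesis by auto
qed

lemma adjoint_dims[simp]: "dim_row (mat_adjoint A) = dim_col A" "dim_col (mat_adjoint A) = dim_row A"
  by (simp_all add: mat_adjoint_def)

lemma adjoint_index[simp]: "i < dim_col A \<Longrightarrow> j < dim_row A \<Longrightarrow> mat_adjoint A $$ (i,j) = conjugate (A $$ (j,i))"
  by (simp add: mat_adjoint_def mat_of_rows_index)

lemma shifted_det_nonzero:
  fixes Y :: "complex mat"
  assumes Y: "Y \<in> carrier_mat n n" and z: "Im \<zeta> \<noteq> 0"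
  shows "det (Y * mat_adjoint Y - \<zeta> \<cdot>\<^sub>m 1\<^sub>m n) \<noteq> 0"
proof
  let ?B = "Y * mat_adjoint Y - \<zeta> \<cdot>\<^sub>m 1\<^sub>m n"
  have B: "?B \<in> carrier_mat n n" using Y by auto
  assume "det ?B = 0"
  then obtain v where v: "v \<in> carrier_vec n" "v \<noteq> 0\<^sub>v n" "?B *\<^sub>v v = 0\<^sub>v n"
    using det_0_iff_vec_prod_zero[OF B] by blast
  have "(\<Sum>t=0..<n. ((\<Sum>u=0..<n. Y $$ (r,u) * cnj (Y $$ (t,u))) - (if r = t then \<zeta> else 0)) * v $ t) = 0"
    if r: "r < n" for r
  proof -
    have z0: "(?B *\<^sub>v v) $ r = 0" using v r by simp
    have "(?B *\<^sub>v v) $ r = (\<Sum>t=0..<n. ?B $$ (r,t) * v $ t)"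
      using v(1) r Y by (simp add: scalar_prod_def)
    also have "\<dots> = (\<Sum>t=0..<n. ((\<Sum>u=0..<n. Y $$ (r,u) * cnj (Y $$ (t,u))) - (if r = t then \<zeta> else 0)) * v $ t)"
      using Y r by (intro sum.cong refl) (auto simp: scalar_prod_def)
    finally show ?thesis using z0 by simp
  qed
  from key_psd[of n "\<lambda>r u. Y $$ (r,u)" \<zeta> "\<lambda>t. v $ t", OF this z] have "\<forall>t<n. v $ t = 0" by simp
  hence "v = 0\<^sub>v n" using v by (auto intro!: eq_vecI)
  with v show False by simp
qed




definition conj_perm :: "(nat \<Rightarrow> nat) \<Rightarrow> complex mat \<Rightarrow> complex mat" where
  "conj_perm \<sigma> A = mat (dim_row A) (dim_col A) (\<lambda>(r,s). A $$ (\<sigma> r, \<sigma> s))"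

lemma conj_perm_dims[simp]: "dim_row (conj_perm \<sigma> A) = dim_row A" "dim_col (conj_perm \<sigma> A) = dim_col A"
  unfolding conj_perm_def by (rule dim_row_mat, rule dim_col_mat)

lemma conj_perm_index[simp]: "r < dim_row A \<Longrightarrow> s < dim_col A \<Longrightarrow> conj_perm \<sigma> A $$ (r,s) = A $$ (\<sigma> r, \<sigma> s)"
  by (simp add: conj_perm_def)

lemma conj_perm_carrier: "A \<in> carrier_mat n n \<Longrightarrow> conj_perm \<sigma> A \<in> carrier_mat n n"
  unfolding carrier_mat_def by simp

lemma perm_lt: "(\<sigma> :: nat \<Rightarrow> nat) permutes {0..<n} \<Longrightarrow> r < n \<Longrightarrow> \<sigma> r < n"
proof -
  assume "\<sigma> permutes {0..<n}" "r < n"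
  hence "\<sigma> r \<in> {0..<n}" using permutes_in_image[of \<sigma> "{0..<n}" r] by simp
  thus ?thesis by simp
qed

lemma mat_mult_entry:
  fixes A B :: "'a :: comm_ring_1 mat"
  assumes A: "A \<in> carrier_mat n n" and B: "B \<in> carrier_mat n n" and r: "r < n" and s: "s < n"
  shows "(A * B) $$ (r,s) = (\<Sum>t\<in>{0..<n}. A $$ (r,t) * B $$ (t,s))"
proof -
  have "(A * B) $$ (r,s) = row A r \<bullet> col B s" using A B r s by simp
  also have "\<dots> = (\<Sum>t\<in>{0..<n}. row A r $ t * col B s $ t)" unfolding scalar_prod_def using B by simp
  also have "\<dots> = (\<Sum>t\<in>{0..<n}. A $$ (r,t) * B $$ (t,s))"
    by (rule sum.cong[OF refl]) (use A B r s in simp)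
  finally show ?thesis .
qed

lemma cp_mult:
  assumes \<sigma>: "\<sigma> permutes {0..<n}" and A: "A \<in> carrier_mat n n" and B: "B \<in> carrier_mat n n"
  shows "conj_perm \<sigma> (A * B) = conj_perm \<sigma> A * conj_perm \<sigma> B"
proof -
  have cA: "conj_perm \<sigma> A \<in> carrier_mat n n" and cB: "conj_perm \<sigma> B \<in> carrier_mat n n"
    using A B by (simp_all add: conj_perm_carrier)
  have AB: "A * B \<in> carrier_mat n n" using A B by simp
  have dims: "dim_row A = n" "dim_col A = n" "dim_row B = n" "dim_col B = n" "dim_row (A * B) = n" "dim_col (A * B) = n"
    using A B by auto
  show ?thesis
  proof (rule eq_matI)
    fix r s assume r: "r < dim_row (conj_perm \<sigma> A * conj_perm \<sigma> B)" and s: "s < dim_col (conj_perm \<sigma> A * conj_perm \<sigma> B)"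
    hence r: "r < n" and s: "s < n" using cA cB by auto
    have rs: "\<sigma> r < n" "\<sigma> s < n" using perm_lt[OF \<sigma>] r s by auto
    have "conj_perm \<sigma> (A * B) $$ (r,s) = (A * B) $$ (\<sigma> r, \<sigma> s)"
      using dims r s by simp
    also have "\<dots> = (\<Sum>t\<in>{0..<n}. A $$ (\<sigma> r, t) * B $$ (t, \<sigma> s))"
      by (rule mat_mult_entry[OF A B rs])
    also have "\<dots> = (\<Sum>t\<in>{0..<n}. A $$ (\<sigma> r, \<sigma> t) * B $$ (\<sigma> t, \<sigma> s))"
      by (subst sum.permute[OF \<sigma>]) simp
    also have "\<dots> = (\<Sum>t\<in>{0..<n}. conj_perm \<sigma> A $$ (r, t) * conj_perm \<sigma> B $$ (t, s))"
      by (rule sum.cong[OF refl]) (use dims r s in simp)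
    also have "\<dots> = (conj_perm \<sigma> A * conj_perm \<sigma> B) $$ (r,s)"
      by (rule mat_mult_entry[OF cA cB r s, symmetric])
    finally show "conj_perm \<sigma> (A * B) $$ (r,s) = (conj_perm \<sigma> A * conj_perm \<sigma> B) $$ (r,s)" .
  qed (use dims in simp_all)
qed

lemma cp_minus:
  assumes \<sigma>: "\<sigma> permutes {0..<n}" and "A \<in> carrier_mat n n" and "B \<in> carrier_mat n n"
  shows "conj_perm \<sigma> (A - B) = conj_perm \<sigma> A - conj_perm \<sigma> B"
  by (rule eq_matI) (use assms perm_lt[OF \<sigma>] in auto)

lemma cp_smult:
  assumes \<sigma>: "\<sigma> permutes {0..<n}" and "A \<in> carrier_mat n n"
  shows "conj_perm \<sigma> (c \<cdot>\<^sub>m A) = c \<cdot>\<^sub>m conj_perm \<sigma> A"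
  by (rule eq_matI) (use assms perm_lt[OF \<sigma>] in auto)

lemma cp_one:
  assumes \<sigma>: "\<sigma> permutes {0..<n}"
  shows "conj_perm \<sigma> (1\<^sub>m n) = 1\<^sub>m n"
proof (rule eq_matI)
  fix r s assume "r < dim_row (1\<^sub>m n :: complex mat)" "s < dim_col (1\<^sub>m n :: complex mat)"
  thus "conj_perm \<sigma> (1\<^sub>m n) $$ (r,s) = 1\<^sub>m n $$ (r,s)"
    using perm_lt[OF \<sigma>] permutes_inj[OF \<sigma>] by (auto simp: inj_eq)
qed auto

lemma cp_adjoint:
  assumes \<sigma>: "\<sigma> permutes {0..<n}" and A: "A \<in> carrier_mat n n"
  shows "conj_perm \<sigma> (mat_adjoint A) = mat_adjoint (conj_perm \<sigma> A)"
  by (rule eq_matI) (use A perm_lt[OF \<sigma>] in auto)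

lemma inv_exists:
  fixes B :: "complex mat"
  assumes B: "B \<in> carrier_mat n n" and d: "det B \<noteq> 0"
  shows "\<exists>R. mat_inverse B = Some R \<and> B * R = 1\<^sub>m n \<and> R * B = 1\<^sub>m n \<and> R \<in> carrier_mat n n"
proof (cases "mat_inverse B")
  case None
  from mat_inverse(1)[OF B None, of undefined] det_non_zero_imp_unit[OF B d, of undefined]
  show ?thesis by blast
next
  case (Some R)
  from mat_inverse(2)[OF B Some] Some show ?thesis by blast
qed

lemma inv_unique:
  fixes B R R' :: "complex mat"
  assumes B: "B \<in> carrier_mat n n" and R: "R \<in> carrier_mat n n" and R': "R' \<in> carrier_mat n n"
    and "B * R = 1\<^sub>m n" and "R' * B = 1\<^sub>m n"
  shows "R' = R"
proof -
  have "R' = R' * (B * R)" using assms right_mult_one_mat[OF R'] by simp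
  also have "\<dots> = (R' * B) * R" using assoc_mult_mat[OF R' B R] by simp
  also have "\<dots> = R" using assms left_mult_one_mat[OF R] by simp
  finally show ?thesis .
qed

lemma resolvent_entry:
  fixes A :: "complex mat" and z \<zeta> :: complex
  assumes A: "A \<in> carrier_mat n n" and z: "Im \<zeta> \<noteq> 0" and r: "r < n" and s: "s < n"
  defines "B \<equiv> (A - z \<cdot>\<^sub>m 1\<^sub>m n) * mat_adjoint (A - z \<cdot>\<^sub>m 1\<^sub>m n) - \<zeta> \<cdot>\<^sub>m 1\<^sub>m n"
  shows "resolvent_P A z \<zeta> $$ (r,s) = cofactor B s r / det B"
proof -
  have Bc: "B \<in> carrier_mat n n" using A by (auto simp: B_def)
  have d: "det B \<noteq> 0" unfolding B_def by (rule shifted_det_nonzero) (use A z in auto)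
  obtain R where R: "mat_inverse B = Some R" "B * R = 1\<^sub>m n" "R * B = 1\<^sub>m n" "R \<in> carrier_mat n n"
    using inv_exists[OF Bc d] by blast
  have adjc: "adj_mat B \<in> carrier_mat n n" using adj_mat(1)[OF Bc] .
  have e1: "(1 / det B) \<cdot>\<^sub>m (det B \<cdot>\<^sub>m 1\<^sub>m n) = (1\<^sub>m n :: complex mat)"
    by (rule eq_matI) (use d in auto)
  have "B * ((1 / det B) \<cdot>\<^sub>m adj_mat B) = 1\<^sub>m n"
    using adj_mat(2)[OF Bc] d Bc adjc e1 by (simp add: mult_smult_distrib)
  hence "R = (1 / det B) \<cdot>\<^sub>m adj_mat B"
    using inv_unique[OF Bc _ R(4), of "(1 / det B) \<cdot>\<^sub>m adj_mat B"] R(3) adjc by simp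
  moreover have "resolvent_P A z \<zeta> = R" using A R(1) by (simp add: resolvent_P_def B_def Let_def)
  ultimately show ?thesis using r s Bc by (simp add: adj_mat_def)
qed

lemma resolvent_conj_perm:
  fixes A :: "complex mat"
  assumes A: "A \<in> carrier_mat n n" and z: "Im \<zeta> \<noteq> 0" and \<sigma>: "\<sigma> permutes {0..<n}"
  shows "resolvent_P (conj_perm \<sigma> A) z \<zeta> = conj_perm \<sigma> (resolvent_P A z \<zeta>)"
proof -
  define Y where "Y = A - z \<cdot>\<^sub>m 1\<^sub>m n"
  define B where "B = Y * mat_adjoint Y - \<zeta> \<cdot>\<^sub>m 1\<^sub>m n"
  have Yc: "Y \<in> carrier_mat n n" using A by (auto simp: Y_def)
  have one: "1\<^sub>m n \<in> carrier_mat n n" by simp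
  have zc: "z \<cdot>\<^sub>m 1\<^sub>m n \<in> carrier_mat n n" and zc': "\<zeta> \<cdot>\<^sub>m 1\<^sub>m n \<in> carrier_mat n n" by simp_all
  have cz: "conj_perm \<sigma> (z \<cdot>\<^sub>m 1\<^sub>m n) = z \<cdot>\<^sub>m 1\<^sub>m n"
    by (simp only: cp_smult[OF \<sigma> one] cp_one[OF \<sigma>])
  have cz': "conj_perm \<sigma> (\<zeta> \<cdot>\<^sub>m 1\<^sub>m n) = \<zeta> \<cdot>\<^sub>m 1\<^sub>m n"
    by (simp only: cp_smult[OF \<sigma> one] cp_one[OF \<sigma>])
  have cY: "conj_perm \<sigma> A - z \<cdot>\<^sub>m 1\<^sub>m n = conj_perm \<sigma> Y"
    unfolding Y_def cp_minus[OF \<sigma> A zc] cz ..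
  have dY: "dim_row Y = n" "dim_col Y = n" using Yc by (auto dest: carrier_matD)
  have adjc: "mat_adjoint Y \<in> carrier_mat n n" by (rule carrier_matI, simp_all only: adjoint_dims dY)
  have YY: "Y * mat_adjoint Y \<in> carrier_mat n n" using Yc adjc by (rule mult_carrier_mat)
  have cB: "conj_perm \<sigma> Y * mat_adjoint (conj_perm \<sigma> Y) - \<zeta> \<cdot>\<^sub>m 1\<^sub>m n = conj_perm \<sigma> B"
    unfolding B_def cp_minus[OF \<sigma> YY zc'] cz' cp_mult[OF \<sigma> Yc adjc] cp_adjoint[OF \<sigma> Yc] ..
  have Bc: "B \<in> carrier_mat n n" unfolding B_def using zc' by (rule minus_carrier_mat)
  have d: "det B \<noteq> 0" unfolding B_def by (rule shifted_det_nonzero[OF Yc z])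
  obtain R where R: "mat_inverse B = Some R" "B * R = 1\<^sub>m n" "R * B = 1\<^sub>m n" "R \<in> carrier_mat n n"
    using inv_exists[OF Bc d] by blast
  have cBc: "conj_perm \<sigma> B \<in> carrier_mat n n" using Bc by (rule conj_perm_carrier)
  have d': "det (conj_perm \<sigma> B) \<noteq> 0" unfolding cB[symmetric]
    by (rule shifted_det_nonzero[OF conj_perm_carrier[OF Yc] z])
  obtain R' where R': "mat_inverse (conj_perm \<sigma> B) = Some R'" "conj_perm \<sigma> B * R' = 1\<^sub>m n"
     "R' * conj_perm \<sigma> B = 1\<^sub>m n" "R' \<in> carrier_mat n n"
    using inv_exists[OF cBc d'] by blast
  have "conj_perm \<sigma> B * conj_perm \<sigma> R = conj_perm \<sigma> (B * R)"
    by (rule cp_mult[OF \<sigma> Bc R(4), symmetric])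
  also have "\<dots> = 1\<^sub>m n" unfolding R(2) by (rule cp_one[OF \<sigma>])
  finally have BR: "conj_perm \<sigma> B * conj_perm \<sigma> R = 1\<^sub>m n" .
  have RR: "R' = conj_perm \<sigma> R"
    by (rule inv_unique[OF cBc conj_perm_carrier[OF R(4)] R'(4) BR R'(3)])
  have dA: "dim_row A = n" using A by auto
  have dcA: "dim_row (conj_perm \<sigma> A) = n" unfolding conj_perm_dims by (rule dA)
  have "resolvent_P A z \<zeta> = the (mat_inverse B)"
    unfolding resolvent_P_def Let_def dA Y_def B_def ..
  also have "\<dots> = R" unfolding R(1) option.sel ..
  finally have r1: "resolvent_P A z \<zeta> = R" .
  have "resolvent_P (conj_perm \<sigma> A) z \<zeta> = the (mat_inverse (conj_perm \<sigma> B))"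
    unfolding resolvent_P_def Let_def dcA cY cB ..
  also have "\<dots> = R'" unfolding R'(1) option.sel ..
  finally show ?thesis unfolding r1 RR .
qed




definition mmeas :: "'x measure \<Rightarrow> nat \<Rightarrow> ('x \<Rightarrow> complex mat) \<Rightarrow> bool" where
  "mmeas N n A \<longleftrightarrow> (\<forall>x. A x \<in> carrier_mat n n) \<and> (\<forall>r<n. \<forall>s<n. (\<lambda>x. A x $$ (r,s)) \<in> borel_measurable N)"

lemma mmeasD1: "mmeas N n A \<Longrightarrow> A x \<in> carrier_mat n n"
  unfolding mmeas_def by blast

lemma mmeasD2: "mmeas N n A \<Longrightarrow> r < n \<Longrightarrow> s < n \<Longrightarrow> (\<lambda>x. A x $$ (r,s)) \<in> borel_measurable N"
  unfolding mmeas_def by blast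

lemma mmeasI:
  assumes "\<And>x. A x \<in> carrier_mat n n" "\<And>r s. r < n \<Longrightarrow> s < n \<Longrightarrow> (\<lambda>x. A x $$ (r,s)) \<in> borel_measurable N"
  shows "mmeas N n A"
  unfolding mmeas_def using assms by blast

lemma mm_mult:
  assumes A: "mmeas N n A" and B: "mmeas N n B"
  shows "mmeas N n (\<lambda>x. A x * B x)"
proof (rule mmeasI)
  fix x show "A x * B x \<in> carrier_mat n n"
    using mmeasD1[OF A] mmeasD1[OF B] by (rule mult_carrier_mat)
next
  fix r s assume r: "r < n" and s: "s < n"
  have "(\<lambda>x. (A x * B x) $$ (r,s)) = (\<lambda>x. \<Sum>t\<in>{0..<n}. A x $$ (r,t) * B x $$ (t,s))"
    by (rule ext, rule mat_mult_entry[OF mmeasD1[OF A] mmeasD1[OF B] r s])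
  also have "\<dots> \<in> borel_measurable N"
    by (intro borel_measurable_sum borel_measurable_times mmeasD2[OF A] mmeasD2[OF B] r s) auto
  finally show "(\<lambda>x. (A x * B x) $$ (r,s)) \<in> borel_measurable N" .
qed

lemma mm_minus:
  assumes A: "mmeas N n A" and B: "mmeas N n B"
  shows "mmeas N n (\<lambda>x. A x - B x)"
proof (rule mmeasI)
  fix x show "A x - B x \<in> carrier_mat n n"
    by (rule minus_carrier_mat[OF mmeasD1[OF B]])
next
  fix r s assume r: "r < n" and s: "s < n"
  have "(\<lambda>x. (A x - B x) $$ (r,s)) = (\<lambda>x. A x $$ (r,s) - B x $$ (r,s))"
  proof
    fix x
    have "dim_row (B x) = n" "dim_col (B x) = n" using mmeasD1[OF B, of x] by auto
    thus "(A x - B x) $$ (r,s) = A x $$ (r,s) - B x $$ (r,s)" using r s by simp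
  qed
  also have "\<dots> \<in> borel_measurable N"
    by (intro borel_measurable_diff mmeasD2[OF A] mmeasD2[OF B] r s)
  finally show "(\<lambda>x. (A x - B x) $$ (r,s)) \<in> borel_measurable N" .
qed

lemma mm_smult:
  assumes A: "mmeas N n A"
  shows "mmeas N n (\<lambda>x. c \<cdot>\<^sub>m A x)"
proof (rule mmeasI)
  fix x show "c \<cdot>\<^sub>m A x \<in> carrier_mat n n"
    using mmeasD1[OF A] by (rule smult_carrier_mat)
next
  fix r s assume r: "r < n" and s: "s < n"
  have "(\<lambda>x. (c \<cdot>\<^sub>m A x) $$ (r,s)) = (\<lambda>x. c * A x $$ (r,s))"
  proof
    fix x
    have "dim_row (A x) = n" "dim_col (A x) = n" using mmeasD1[OF A, of x] by auto
    thus "(c \<cdot>\<^sub>m A x) $$ (r,s) = c * A x $$ (r,s)" using r s by simp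
  qed
  also have "\<dots> \<in> borel_measurable N"
    by (intro borel_measurable_times borel_measurable_const mmeasD2[OF A] r s)
  finally show "(\<lambda>x. (c \<cdot>\<^sub>m A x) $$ (r,s)) \<in> borel_measurable N" .
qed

lemma mm_const:
  assumes C: "C \<in> carrier_mat n n"
  shows "mmeas N n (\<lambda>x. C)"
  by (rule mmeasI) (use C in auto)

lemma cnj_meas: "f \<in> borel_measurable N \<Longrightarrow> (\<lambda>x. cnj (f x)) \<in> borel_measurable N"
proof -
  assume f: "f \<in> borel_measurable N"
  have "cnj \<in> borel_measurable borel"
    by (rule borel_measurable_continuous_onI) (intro continuous_on_cnj continuous_on_id)
  from measurable_compose[OF f this] show ?thesis .
qed

lemma mm_adjoint:
  assumes A: "mmeas N n A"
  shows "mmeas N n (\<lambda>x. mat_adjoint (A x))"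
proof (rule mmeasI)
  fix x show "mat_adjoint (A x) \<in> carrier_mat n n"
  proof -
    have "dim_row (A x) = n" "dim_col (A x) = n" using mmeasD1[OF A, of x] by (auto dest: carrier_matD)
    thus ?thesis by (intro carrier_matI) (simp_all only: adjoint_dims)
  qed
next
  fix r s assume r: "r < n" and s: "s < n"
  have "(\<lambda>x. mat_adjoint (A x) $$ (r,s)) = (\<lambda>x. cnj (A x $$ (s,r)))"
  proof
    fix x
    have "dim_row (A x) = n" "dim_col (A x) = n" using mmeasD1[OF A, of x] by auto
    thus "mat_adjoint (A x) $$ (r,s) = cnj (A x $$ (s,r))" using r s by simp
  qed
  also have "\<dots> \<in> borel_measurable N"
    by (intro cnj_meas mmeasD2[OF A] r s)
  finally show "(\<lambda>x. mat_adjoint (A x) $$ (r,s)) \<in> borel_measurable N" .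
qed

lemma mm_det:
  assumes A: "mmeas N n A"
  shows "(\<lambda>x. det (A x)) \<in> borel_measurable N"
proof -
  have "(\<lambda>x. det (A x)) = (\<lambda>x. \<Sum>p\<in>{p. p permutes {0..<n}}. signof p * (\<Prod>i = 0..<n. A x $$ (i, p i)))"
    by (rule ext, rule det_def'[OF mmeasD1[OF A]])
  also have "\<dots> \<in> borel_measurable N"
  proof (intro borel_measurable_sum borel_measurable_times borel_measurable_const borel_measurable_prod)
    fix p i assume p: "p \<in> {p. p permutes {0..<n}}" and i: "i \<in> {0..<n}"
    hence "p i < n" using perm_lt[of p n i] by auto
    thus "(\<lambda>x. A x $$ (i, p i)) \<in> borel_measurable N" using i by (intro mmeasD2[OF A]) auto
  qed
  finally show ?thesis .
qed

lemma mm_delete: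
  assumes A: "mmeas N n A"
  shows "mmeas N (n - 1) (\<lambda>x. mat_delete (A x) i j)"
proof (rule mmeasI)
  fix x show "mat_delete (A x) i j \<in> carrier_mat (n - 1) (n - 1)"
    using mmeasD1[OF A, of x] by (rule mat_delete_carrier)
next
  fix r s assume r: "r < n - 1" and s: "s < n - 1"
  have "(\<lambda>x. mat_delete (A x) i j $$ (r,s)) = (\<lambda>x. A x $$ (if r < i then r else Suc r, if s < j then s else Suc s))"
  proof
    fix x
    have "dim_row (A x) = n" "dim_col (A x) = n" using mmeasD1[OF A, of x] by auto
    thus "mat_delete (A x) i j $$ (r,s) = A x $$ (if r < i then r else Suc r, if s < j then s else Suc s)"
      using r s unfolding mat_delete_def by simp
  qed
  also have "\<dots> \<in> borel_measurable N"
    by (rule mmeasD2[OF A]) (use r s in auto)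
  finally show "(\<lambda>x. mat_delete (A x) i j $$ (r,s)) \<in> borel_measurable N" .
qed

lemma mm_resolvent:
  assumes A: "mmeas N n A" and z: "Im \<zeta> \<noteq> 0" and r: "r < n" and s: "s < n"
  shows "(\<lambda>x. resolvent_P (A x) z \<zeta> $$ (r,s)) \<in> borel_measurable N"
proof -
  define B where "B x = (A x - z \<cdot>\<^sub>m 1\<^sub>m n) * mat_adjoint (A x - z \<cdot>\<^sub>m 1\<^sub>m n) - \<zeta> \<cdot>\<^sub>m 1\<^sub>m n" for x
  have one: "1\<^sub>m n \<in> carrier_mat n n" by simp
  have mY: "mmeas N n (\<lambda>x. A x - z \<cdot>\<^sub>m 1\<^sub>m n)"
    by (intro mm_minus A mm_const smult_carrier_mat one)
  have mB: "mmeas N n B"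
    unfolding B_def by (intro mm_minus mm_mult mY mm_adjoint mm_const smult_carrier_mat one)
  have "(\<lambda>x. resolvent_P (A x) z \<zeta> $$ (r,s)) = (\<lambda>x. cofactor (B x) s r / det (B x))"
    by (rule ext, unfold B_def, rule resolvent_entry[OF mmeasD1[OF A] z r s])
  also have "\<dots> \<in> borel_measurable N"
    unfolding cofactor_def
    by (intro borel_measurable_divide borel_measurable_times borel_measurable_const mm_det[OF mm_delete[OF mB]] mm_det[OF mB])
  finally show ?thesis .
qed




lemma shift_inj:
  fixes x y k m :: nat
  assumes "x < m" "y < m"
  shows "(x + k) mod m = (y + k) mod m \<longleftrightarrow> x = y"
proof
  assume "(x + k) mod m = (y + k) mod m"
  hence "[x + k = y + k] (mod m)" unfolding cong_def .
  hence "[x = y] (mod m)" by (simp only: cong_add_rcancel_nat)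
  thus "x = y" using assms by (rule cong_less_modulus_unique_nat)
qed simp

lemma shift_m1:
  fixes i k m :: nat assumes "0 < m"
  shows "(((i + m - 1) mod m) + k) mod m = (((i + k) mod m) + m - 1) mod m"
proof -
  have "(((i + m - 1) mod m) + k) mod m = (i + m - 1 + k) mod m" by (simp add: mod_add_left_eq)
  also have "i + m - 1 + k = (i + k) + (m - 1)" using assms by simp
  also have "((i + k) + (m - 1)) mod m = (((i + k) mod m) + (m - 1)) mod m" by (simp add: mod_add_left_eq)
  also have "((i + k) mod m) + (m - 1) = ((i + k) mod m) + m - 1" using assms by simp
  finally show ?thesis .
qed

lemma shift_p1:
  fixes i k m :: nat
  shows "(((i + 1) mod m) + k) mod m = (((i + k) mod m) + 1) mod m"
proof -
  have "(((i + 1) mod m) + k) mod m = (i + 1 + k) mod m" by (simp add: mod_add_left_eq)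
  also have "i + 1 + k = (i + k) + 1" by simp
  also have "((i + k) + 1) mod m = (((i + k) mod m) + 1) mod m" by (rule mod_add_left_eq[symmetric])
  finally show ?thesis .
qed

lemma divmod_comb:
  fixes Q q b :: nat
  assumes "q < b"
  shows "(Q * b + q) div b = Q" "(Q * b + q) mod b = q"
proof -
  have b: "b \<noteq> 0" using assms by simp
  have "(q + Q * b) div b = Q + q div b" using div_mult_self1[OF b] by simp
  thus "(Q * b + q) div b = Q" using assms by (simp add: add.commute)
  have "(q + Q * b) mod b = q mod b" by simp
  thus "(Q * b + q) mod b = q" using assms by (simp add: add.commute)
qed

lemma comb_lt:
  fixes Q q b m :: nat
  assumes "Q < m" "q < b"
  shows "Q * b + q < m * b"
proof -
  have "Q * b + q < Q * b + b" using assms by simp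
  also have "\<dots> = (Q + 1) * b" by simp
  also have "\<dots> \<le> m * b" using assms by (intro mult_right_mono) auto
  finally show ?thesis .
qed

lemma band_dims[simp]: "dim_row (periodic_band n b x) = n" "dim_col (periodic_band n b x) = n"
  unfolding periodic_band_def Let_def by (rule dim_row_mat, rule dim_col_mat)

lemma band_carrier: "periodic_band n b x \<in> carrier_mat n n"
  by (rule carrier_matI) simp_all

lemma band_entry:
  assumes "r < n" "s < n"
  shows "periodic_band n b x $$ (r,s) =
     (if s div b = r div b then x (0, r div b, r mod b, s mod b) else 0)
   + (if s div b = (r div b + n div b - 1) mod (n div b) then x (2, (r div b + n div b - 1) mod (n div b), r mod b, s mod b) else 0)
   + (if s div b = (r div b + 1) mod (n div b) then x (1, (r div b + 1) mod (n div b), r mod b, s mod b) else 0)"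
  unfolding periodic_band_def Let_def using assms by simp




definition sig :: "nat \<Rightarrow> nat \<Rightarrow> nat \<Rightarrow> nat \<Rightarrow> nat \<Rightarrow> nat \<Rightarrow> nat" where
  "sig n m b ib ia r = (if r < n then ((r div b + ib) mod m) * b + (r mod b + ia) mod b else r)"

definition pii :: "nat \<Rightarrow> nat \<Rightarrow> nat \<Rightarrow> nat \<Rightarrow> nat \<times> nat \<times> nat \<times> nat \<Rightarrow> nat \<times> nat \<times> nat \<times> nat" where
  "pii m b ib ia = (\<lambda>(k, j, a, c). (k, (j + ib) mod m, (a + ia) mod b, (c + ia) mod b))"

lemma sig_facts:
  assumes b: "0 < b" and n: "n = m * b" and ib: "ib < m" and r: "r < n"
  shows "sig n m b ib ia r div b = (r div b + ib) mod m"
    "sig n m b ib ia r mod b = (r mod b + ia) mod b"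
    "sig n m b ib ia r < n"
proof -
  have m: "0 < m" using ib by simp
  have q: "(r mod b + ia) mod b < b" using b by simp
  have Q: "(r div b + ib) mod m < m" using m by simp
  show "sig n m b ib ia r div b = (r div b + ib) mod m"
    unfolding sig_def using r divmod_comb(1)[OF q] by simp
  show "sig n m b ib ia r mod b = (r mod b + ia) mod b"
    unfolding sig_def using r divmod_comb(2)[OF q] by simp
  show "sig n m b ib ia r < n"
    unfolding sig_def using r comb_lt[OF Q q] n by simp
qed

lemma div_lt: "r < m * b \<Longrightarrow> r div b < (m::nat)"
  by (rule less_mult_imp_div_less)

lemma band_perm:
  fixes e :: "nat \<times> nat \<times> nat \<times> nat \<Rightarrow> complex"
  assumes b: "0 < b" and n: "n = m * b" and ib: "ib < m" and ia: "ia < b"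
  shows "periodic_band n b (e \<circ> pii m b ib ia) = conj_perm (sig n m b ib ia) (periodic_band n b e)"
proof (rule eq_matI)
  let ?\<sigma> = "sig n m b ib ia"
  have m: "0 < m" using ib by simp
  have nd: "n div b = m" using n b by simp
  fix r s assume r: "r < dim_row (conj_perm ?\<sigma> (periodic_band n b e))"
    and s: "s < dim_col (conj_perm ?\<sigma> (periodic_band n b e))"
  hence r: "r < n" and s: "s < n" by simp_all
  define i where "i = r div b"
  define j where "j = s div b"
  define a where "a = r mod b"
  define c where "c = s mod b"
  define i' where "i' = (i + ib) mod m"
  define j' where "j' = (j + ib) mod m"
  define a' where "a' = (a + ia) mod b"
  define c' where "c' = (c + ia) mod b"
  have ilt: "i < m" unfolding i_def using r n div_lt by simp
  have jlt: "j < m" unfolding j_def using s n div_lt by simp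
  define im where "im = (i + m - 1) mod m"
  define ip where "ip = (i + 1) mod m"
  have imlt: "im < m" unfolding im_def using m by simp
  have iplt: "ip < m" unfolding ip_def using m by simp
  have sr: "?\<sigma> r < n" "?\<sigma> r div b = i'" "?\<sigma> r mod b = a'"
    using sig_facts[OF b n ib r] by (simp_all add: i'_def i_def a'_def a_def)
  have ss: "?\<sigma> s < n" "?\<sigma> s div b = j'" "?\<sigma> s mod b = c'"
    using sig_facts[OF b n ib s] by (simp_all add: j'_def j_def c'_def c_def)
  have L: "periodic_band n b (e \<circ> pii m b ib ia) $$ (r,s) =
     (if j = i then e (0, i', a', c') else 0)
   + (if j = im then e (2, (im + ib) mod m, a', c') else 0)
   + (if j = ip then e (1, (ip + ib) mod m, a', c') else 0)"
    unfolding band_entry[OF r s] nd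
    by (simp add: i_def j_def a_def c_def i'_def a'_def c'_def im_def ip_def pii_def)
  have R: "conj_perm ?\<sigma> (periodic_band n b e) $$ (r,s) =
     (if j' = i' then e (0, i', a', c') else 0)
   + (if j' = (i' + m - 1) mod m then e (2, (i' + m - 1) mod m, a', c') else 0)
   + (if j' = (i' + 1) mod m then e (1, (i' + 1) mod m, a', c') else 0)"
    using r s
    by (simp add: band_entry[OF sr(1) ss(1)] nd sr(2,3) ss(2,3))
  have e1: "(j = i) = (j' = i')" unfolding j'_def i'_def using shift_inj[OF jlt ilt] by simp
  have e2a: "(im + ib) mod m = (i' + m - 1) mod m" unfolding im_def i'_def by (rule shift_m1[OF m])
  have e2: "(j = im) = (j' = (i' + m - 1) mod m)" unfolding j'_def e2a[symmetric] using shift_inj[OF jlt imlt] by simp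
  have e3a: "(ip + ib) mod m = (i' + 1) mod m" unfolding ip_def i'_def by (rule shift_p1)
  have e3: "(j = ip) = (j' = (i' + 1) mod m)" unfolding j'_def e3a[symmetric] using shift_inj[OF jlt iplt] by simp
  show "periodic_band n b (e \<circ> pii m b ib ia) $$ (r,s) = conj_perm ?\<sigma> (periodic_band n b e) $$ (r,s)"
    unfolding L R e1 e2 e3 e2a e3a ..
qed simp_all




lemma sig_permutes:
  assumes b: "0 < b" and n: "n = m * b" and ib: "ib < m"
  shows "sig n m b ib ia permutes {0..<n}"
proof (rule bij_imp_permutes)
  let ?\<sigma> = "sig n m b ib ia"
  have m: "0 < m" using ib by simp
  have inj: "inj_on ?\<sigma> {0..<n}"
  proof (rule inj_onI)
    fix r s assume r: "r \<in> {0..<n}" and s: "s \<in> {0..<n}" and eq: "?\<sigma> r = ?\<sigma> s"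
    have r': "r < n" and s': "s < n" using r s by auto
    have "(r div b + ib) mod m = (s div b + ib) mod m"
      using sig_facts(1)[where ia=ia, OF b n ib r'] sig_facts(1)[where ia=ia, OF b n ib s'] eq by simp
    hence d: "r div b = s div b"
      using shift_inj[OF div_lt div_lt] r' s' n by simp
    have "(r mod b + ia) mod b = (s mod b + ia) mod b"
      using sig_facts(2)[where ia=ia, OF b n ib r'] sig_facts(2)[where ia=ia, OF b n ib s'] eq by simp
    hence md: "r mod b = s mod b"
      using shift_inj[of "r mod b" b "s mod b"] b by simp
    show "r = s" using d md by (metis div_mult_mod_eq)
  qed
  have sub: "?\<sigma> ` {0..<n} \<subseteq> {0..<n}"
    using sig_facts(3)[OF b n ib] by auto
  have "?\<sigma> ` {0..<n} = {0..<n}" by (rule endo_inj_surj[OF _ sub inj]) simp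
  with inj show "bij_betw ?\<sigma> {0..<n} {0..<n}" unfolding bij_betw_def by simp
next
  fix x assume "x \<notin> {0..<n}"
  thus "sig n m b ib ia x = x" unfolding sig_def by simp
qed

lemma sig_zero:
  assumes b: "0 < b" and n: "n = m * b" and i: "i < n"
  shows "sig n m b (i div b) (i mod b) 0 = i"
proof -
  have "i div b < m" using i n div_lt by simp
  thus ?thesis unfolding sig_def using i b by simp
qed

lemma pii_in:
  assumes b: "0 < b" and ib: "ib < m" and k: "k \<in> block_index_set m b"
  shows "pii m b ib ia k \<in> block_index_set m b"
  using k b ib unfolding block_index_set_def pii_def by auto

lemma pii_inj:
  assumes b: "0 < b" and ib: "ib < m"
  shows "inj_on (pii m b ib ia) (block_index_set m b)"
proof (rule inj_onI)
  fix x y assume x: "x \<in> block_index_set m b" and y: "y \<in> block_index_set m b"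
    and eq: "pii m b ib ia x = pii m b ib ia y"
  obtain k j a c where xd: "x = (k, j, a, c)" by (cases x) auto
  obtain k' j' a' c' where yd: "y = (k', j', a', c')" by (cases y) auto
  have lt: "j < m" "a < b" "c < b" "j' < m" "a' < b" "c' < b"
    using x y unfolding xd yd block_index_set_def by auto
  have "k = k'" "(j + ib) mod m = (j' + ib) mod m" "(a + ia) mod b = (a' + ia) mod b"
    "(c + ia) mod b = (c' + ia) mod b"
    using eq unfolding xd yd pii_def by simp_all
  hence "k = k'" "j = j'" "a = a'" "c = c'"
    using shift_inj[OF lt(1) lt(4)] shift_inj[OF lt(2) lt(5)] shift_inj[OF lt(3) lt(6)] by simp_all
  thus "x = y" unfolding xd yd by simp
qed

lemma if_meas: "f \<in> borel_measurable N \<Longrightarrow> (\<lambda>x. if P then f x else 0) \<in> borel_measurable N"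
  by (cases P) simp_all

lemma band_mmeas:
  assumes b: "0 < b" and n: "n = m * b"
  shows "mmeas (PiM (block_index_set m b) (\<lambda>_. borel)) n (\<lambda>x. periodic_band n b x)"
proof (rule mmeasI)
  fix x show "periodic_band n b x \<in> carrier_mat n n" by (rule band_carrier)
next
  fix r s assume r: "r < n" and s: "s < n"
  let ?I = "block_index_set m b"
  have nd: "n div b = m" using n b by simp
  have m: "0 < m" using r n by (cases m) auto
  have comp: "(\<lambda>x. x k) \<in> borel_measurable (PiM ?I (\<lambda>_. borel))" if "k \<in> ?I" for k
    using measurable_component_singleton[OF that, of "\<lambda>_. borel"] by simp
  have il: "r div b < m" using r n div_lt by simp
  have ab: "r mod b < b" "s mod b < b" using b by simp_all
  have k1: "(0, r div b, r mod b, s mod b) \<in> ?I" using il ab unfolding block_index_set_def by simp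
  have k2: "(2, (r div b + m - 1) mod m, r mod b, s mod b) \<in> ?I" using m ab unfolding block_index_set_def by simp
  have k3: "(1, (r div b + 1) mod m, r mod b, s mod b) \<in> ?I" using m ab unfolding block_index_set_def by simp
  show "(\<lambda>x. periodic_band n b x $$ (r,s)) \<in> borel_measurable (PiM ?I (\<lambda>_. borel))"
    unfolding band_entry[OF r s] nd
    by (intro borel_measurable_add if_meas comp k1 k2 k3)
qed

lemma band_restrict:
  assumes b: "0 < b" and n: "n = m * b" and eq: "\<And>k. k \<in> block_index_set m b \<Longrightarrow> x k = y k"
  shows "periodic_band n b x = periodic_band n b y"
proof (rule eq_matI)
  fix r s assume "r < dim_row (periodic_band n b y)" "s < dim_col (periodic_band n b y)"
  hence r: "r < n" and s: "s < n" by simp_all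
  let ?I = "block_index_set m b"
  have nd: "n div b = m" using n b by simp
  have m: "0 < m" using r n by (cases m) auto
  have il: "r div b < m" using r n div_lt by simp
  have ab: "r mod b < b" "s mod b < b" using b by simp_all
  have k1: "(0, r div b, r mod b, s mod b) \<in> ?I" using il ab unfolding block_index_set_def by simp
  have k2: "(2, (r div b + m - 1) mod m, r mod b, s mod b) \<in> ?I" using m ab unfolding block_index_set_def by simp
  have k3: "(1, (r div b + 1) mod m, r mod b, s mod b) \<in> ?I" using m ab unfolding block_index_set_def by simp
  show "periodic_band n b x $$ (r,s) = periodic_band n b y $$ (r,s)"
    unfolding band_entry[OF r s] nd eq[OF k1] eq[OF k2] eq[OF k3] ..
qed simp_all




lemma resolvent_carrier:
  fixes A :: "complex mat"
  assumes A: "A \<in> carrier_mat n n" and z: "Im \<zeta> \<noteq> 0"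
  shows "resolvent_P A z \<zeta> \<in> carrier_mat n n"
proof -
  define B where "B = (A - z \<cdot>\<^sub>m 1\<^sub>m n) * mat_adjoint (A - z \<cdot>\<^sub>m 1\<^sub>m n) - \<zeta> \<cdot>\<^sub>m 1\<^sub>m n"
  have zc: "\<zeta> \<cdot>\<^sub>m 1\<^sub>m n \<in> carrier_mat n n" by simp
  have Bc: "B \<in> carrier_mat n n" unfolding B_def using zc by (rule minus_carrier_mat)
  have d: "det B \<noteq> 0" unfolding B_def by (rule shifted_det_nonzero) (use A z in auto)
  obtain R where R: "mat_inverse B = Some R" "R \<in> carrier_mat n n"
    using inv_exists[OF Bc d] by blast
  have dA: "dim_row A = n" using A by auto
  have "resolvent_P A z \<zeta> = the (mat_inverse B)"
    unfolding resolvent_P_def Let_def dA B_def ..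
  also have "\<dots> = R" unfolding R(1) option.sel ..
  finally show ?thesis using R(2) by simp
qed

theorem lemmaA8:
  fixes M :: "'w measure" and \<xi> :: "'w \<Rightarrow> complex"
    and E :: "nat \<times> nat \<times> nat \<times> nat \<Rightarrow> 'w \<Rightarrow> complex"
    and n b :: nat and z \<zeta> :: complex
  assumes "prob_space M"
    and "\<xi> \<in> borel_measurable M"
    and "integrable M \<xi>" and "integral\<^sup>L M \<xi> = 0"
    and "integrable M (\<lambda>\<omega>. (cmod (\<xi> \<omega>))\<^sup>2)" and "integral\<^sup>L M (\<lambda>\<omega>. (cmod (\<xi> \<omega>))\<^sup>2) = 1"
    and "\<exists>\<epsilon>>0. integrable M (\<lambda>\<omega>. cmod (\<xi> \<omega>) powr (4 + \<epsilon>))"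
    and "0 < b" and "b dvd n"
    and "prob_space.indep_vars M (\<lambda>_. borel) E (block_index_set (n div b) b)"
    and "\<forall>k \<in> block_index_set (n div b) b. distr M borel (E k) = distr M borel \<xi>"
    and "0 < Im \<zeta>"
  shows "\<forall>i < n.
    integral\<^sup>L M (\<lambda>\<omega>. resolvent_P ((1 / complex_of_real (sqrt (3 * real b))) \<cdot>\<^sub>m
                       periodic_band n b (\<lambda>k. E k \<omega>)) z \<zeta> $$ (i, i))
  = integral\<^sup>L M (\<lambda>\<omega>. resolvent_P ((1 / complex_of_real (sqrt (3 * real b))) \<cdot>\<^sub>m
                       periodic_band n b (\<lambda>k. E k \<omega>)) z \<zeta> $$ (0, 0))"
proof (intro allI impI)
  fix i assume i: "i < n"
  interpret P: prob_space M by (rule assms(1))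
  define m where "m = n div b"
  have b: "0 < b" by (rule assms(8))
  have n: "n = m * b" using assms(9) unfolding m_def by simp
  have m: "0 < m" using i n by (cases m) auto
  define I where "I = block_index_set m b"
  define c where "c = 1 / complex_of_real (sqrt (3 * real b))"
  define F where "F x = resolvent_P (c \<cdot>\<^sub>m periodic_band n b x) z \<zeta>" for x
  define ib where "ib = i div b"
  define ia where "ia = i mod b"
  have ib: "ib < m" unfolding ib_def using i n div_lt by simp
  have ia: "ia < b" unfolding ia_def using b by simp
  define \<sigma> where "\<sigma> = sig n m b ib ia"
  define \<pi> where "\<pi> = pii m b ib ia"
  have zz: "Im \<zeta> \<noteq> 0" using assms(12) by simp
  have \<sigma>p: "\<sigma> permutes {0..<n}" unfolding \<sigma>_def by (rule sig_permutes[OF b n ib])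
  have \<sigma>0: "\<sigma> 0 = i" unfolding \<sigma>_def ib_def ia_def by (rule sig_zero[OF b n i])
  have keyA: "F (e \<circ> \<pi>) $$ (0,0) = F e $$ (i,i)" for e
  proof -
    have Pc: "c \<cdot>\<^sub>m periodic_band n b e \<in> carrier_mat n n" by (intro smult_carrier_mat band_carrier)
    have "F (e \<circ> \<pi>) = resolvent_P (c \<cdot>\<^sub>m conj_perm \<sigma> (periodic_band n b e)) z \<zeta>"
      unfolding F_def \<pi>_def \<sigma>_def band_perm[OF b n ib ia] ..
    also have "\<dots> = resolvent_P (conj_perm \<sigma> (c \<cdot>\<^sub>m periodic_band n b e)) z \<zeta>"
      unfolding cp_smult[OF \<sigma>p band_carrier] ..
    also have "\<dots> = conj_perm \<sigma> (F e)"
      unfolding F_def by (rule resolvent_conj_perm[OF Pc zz \<sigma>p])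
    finally have "F (e \<circ> \<pi>) = conj_perm \<sigma> (F e)" .
    moreover have "F e \<in> carrier_mat n n" unfolding F_def by (rule resolvent_carrier[OF Pc zz])
    ultimately show ?thesis using i \<sigma>0 by simp
  qed
  have indep: "P.indep_vars (\<lambda>_. borel) E I" using assms(10) unfolding I_def m_def .
  have rv: "E k \<in> borel_measurable M" if "k \<in> I" for k
    using indep that unfolding P.indep_vars_def by auto
  define D where "D = distr M borel \<xi>"
  define L where "L = PiM I (\<lambda>_. D)"
  define L0 where "L0 = PiM I (\<lambda>_. (borel :: complex measure))"
  have Ine: "I \<noteq> {}" unfolding I_def block_index_set_def using m b by auto
  define \<Phi> where "\<Phi> = (\<lambda>\<omega>. \<lambda>k\<in>I. E k \<omega>)"
  have "distr M L0 \<Phi> = PiM I (\<lambda>k. distr M borel (E k))"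
    using P.indep_vars_iff_distr_eq_PiM'[where M'="\<lambda>_. borel" and X=E, OF Ine rv] indep unfolding L0_def \<Phi>_def by simp
  also have "\<dots> = L" unfolding L_def D_def
    by (rule PiM_cong) (use assms(11) in \<open>simp_all add: I_def m_def\<close>)
  finally have dist0: "distr M L0 \<Phi> = L" .
  have setsD: "sets D = sets borel" by (simp add: D_def)
  have setsL: "sets L = sets L0" unfolding L_def L0_def by (rule sets_PiM_cong) (simp_all add: setsD)
  have \<Phi>m0: "\<Phi> \<in> measurable M L0" unfolding \<Phi>_def L0_def by (rule measurable_restrict) (rule rv)
  have \<Phi>m: "\<Phi> \<in> measurable M L" unfolding measurable_cong_sets[where M=M and M'=M, OF refl setsL] by (rule \<Phi>m0)
  have dist1: "distr M L \<Phi> = L"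
  proof -
    have "distr M L \<Phi> = distr M L0 \<Phi>" by (rule distr_cong[OF refl setsL]) simp
    thus ?thesis using dist0 by simp
  qed
  define T where "T = (\<lambda>x :: nat \<times> nat \<times> nat \<times> nat \<Rightarrow> complex. \<lambda>k\<in>I. x (\<pi> k))"
  have \<pi>I: "\<pi> k \<in> I" if "k \<in> I" for k unfolding \<pi>_def I_def by (rule pii_in[OF b ib that[unfolded I_def]])
  have Tm: "T \<in> measurable L L" unfolding T_def L_def
    by (rule measurable_restrict) (rule measurable_component_singleton[OF \<pi>I])
  have Dp: "prob_space D" unfolding D_def by (rule P.prob_space_distr) (rule assms(2))
  have distT: "distr L L T = L" unfolding L_def T_def
    using distr_PiM_reindex[of I "\<lambda>_. D" \<pi> I] Dp pii_inj[OF b ib] \<pi>I unfolding \<pi>_def I_def by auto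
  have dist2: "distr M L (T \<circ> \<Phi>) = L"
    using distr_distr[OF Tm \<Phi>m] dist1 distT by simp
  have Gm0: "(\<lambda>x. F x $$ (0,0)) \<in> borel_measurable L0"
    unfolding F_def L0_def I_def
    by (rule mm_resolvent[OF mm_smult[OF band_mmeas[OF b n]] zz]) (use i in auto)
  have Gm: "(\<lambda>x. F x $$ (0,0)) \<in> borel_measurable L" unfolding measurable_cong_sets[where N=borel and N'=borel, OF setsL refl] by (rule Gm0)
  have TPhi: "F ((T \<circ> \<Phi>) \<omega>) = F ((\<lambda>k. E k \<omega>) \<circ> \<pi>)" for \<omega>
    unfolding F_def T_def \<Phi>_def
    by (rule arg_cong[where f = "\<lambda>x. resolvent_P (c \<cdot>\<^sub>m x) z \<zeta>"], rule band_restrict[OF b n])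
       (use \<pi>I in \<open>simp add: I_def\<close>)
  have Phi: "F (\<Phi> \<omega>) = F (\<lambda>k. E k \<omega>)" for \<omega>
    unfolding F_def \<Phi>_def
    by (rule arg_cong[where f = "\<lambda>x. resolvent_P (c \<cdot>\<^sub>m x) z \<zeta>"], rule band_restrict[OF b n])
       (simp add: I_def)
  have "integral\<^sup>L M (\<lambda>\<omega>. F (\<lambda>k. E k \<omega>) $$ (i,i)) = integral\<^sup>L M (\<lambda>\<omega>. F ((T \<circ> \<Phi>) \<omega>) $$ (0,0))"
    unfolding TPhi keyA ..
  also have "\<dots> = integral\<^sup>L (distr M L (T \<circ> \<Phi>)) (\<lambda>x. F x $$ (0,0))"
    by (rule integral_distr[symmetric]) (use Tm \<Phi>m Gm in auto)
  also have "\<dots> = integral\<^sup>L (distr M L \<Phi>) (\<lambda>x. F x $$ (0,0))" unfolding dist1 dist2 ..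
  also have "\<dots> = integral\<^sup>L M (\<lambda>\<omega>. F (\<Phi> \<omega>) $$ (0,0))"
    by (rule integral_distr) (use \<Phi>m Gm in auto)
  also have "\<dots> = integral\<^sup>L M (\<lambda>\<omega>. F (\<lambda>k. E k \<omega>) $$ (0,0))" unfolding Phi ..
  finally show "integral\<^sup>L M (\<lambda>\<omega>. resolvent_P ((1 / complex_of_real (sqrt (3 * real b))) \<cdot>\<^sub>m
                       periodic_band n b (\<lambda>k. E k \<omega>)) z \<zeta> $$ (i, i))
  = integral\<^sup>L M (\<lambda>\<omega>. resolvent_P ((1 / complex_of_real (sqrt (3 * real b))) \<cdot>\<^sub>m
                       periodic_band n b (\<lambda>k. E k \<omega>)) z \<zeta> $$ (0, 0))"
    unfolding F_def c_def .
qed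



end
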